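(* Let $(X_k)_{k\ge1}$ be a random walk on a finite vertex set $V$ (possibly non-Markovian and non-stationary). For an initial node $u\in V$ (i.e., $X_1=u$), assume $K(u,\{v\})<\infty$ for all $v\in V$. Then $S\mapsto K(u,S)$ is supermodular on the nonempty subsets of $V$: for all nonempty $S\subseteq T\subseteq V$ and $v\in V\setminus T$, $K(u,S\cup\{v\})-K(u,S)\le K(u,T\cup\{v\})-K(u,T)$. Consequently, for any probability distribution $\pi$ on $V$ (with these finiteness assumptions holding for each $u$ in the support of $\pi$), $K(\pi,S)=\sum_{u\in V}\pi(u)K(u,S)$ is also supermodular on the nonempty subsets of $V$.
   Context: A random walk on $V$ is a discrete-time random process $X_1,X_2,\dots$ with values in $V$ whose law is given by arbitrary conditional distributions $\Pr(X_k=\cdot\mid X_1,\dots,X_{k-1})$. For nonempty $S\subseteq V$, $\kappa(S)=\min\{k: X_k=X_1 \text{ and } X_j\in S \text{ for some } j<k\}$, and the commute time from $u$ is $K(u,S)=\mathbf{E}[\kappa(S)\mid X_1=u]$. Supermodular means the negative is submodular, where $f$ is submodular if $f(S\cup\{v\})-f(S)\ge f(T\cup\{v\})-f(T)$ for $S\subseteq T$, $v\notin T$. *)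

theory Defs
  imports "HOL-Probability.Probability"
begin

text \<open>A trajectory is a function x :: nat => 'a; only the positions 1, 2, ... are used
  (x 1 is the initial node X_1).  kappa S x = min k such that x k = x 1 and x j in S for
  some j < k (with j >= 1); it is infinite if no such k exists.\<close>
definition kappa :: "'a set \<Rightarrow> (nat \<Rightarrow> 'a) \<Rightarrow> ennreal" where
  "kappa S x =
     (if \<exists>k. x k = x 1 \<and> (\<exists>j. 1 \<le> j \<and> j < k \<and> x j \<in> S)
      then of_nat (LEAST k. x k = x 1 \<and> (\<exists>j. 1 \<le> j \<and> j < k \<and> x j \<in> S))
      else \<infinity>)"

definition commute_time :: "'w measure \<Rightarrow> (nat \<Rightarrow> 'w \<Rightarrow> 'a) \<Rightarrow> 'a set \<Rightarrow> ennreal" where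
  "commute_time M X S = (\<integral>\<^sup>+ \<omega>. kappa S (\<lambda>k. X k \<omega>) \<partial>M)"

definition walk_from :: "'a set \<Rightarrow> 'a \<Rightarrow> 'w measure \<Rightarrow> (nat \<Rightarrow> 'w \<Rightarrow> 'a) \<Rightarrow> bool" where
  "walk_from V u M X \<longleftrightarrow> prob_space M \<and>
     (\<forall>k. X k \<in> measurable M (count_space UNIV)) \<and>
     (\<forall>k. \<forall>\<omega>\<in>space M. X k \<omega> \<in> V) \<and>
     (\<forall>\<omega>\<in>space M. X 1 \<omega> = u)"

definition submodular_on :: "'a set \<Rightarrow> ('a set \<Rightarrow> real) \<Rightarrow> bool" where
  "submodular_on V f \<longleftrightarrow>
     (\<forall>S T v. S \<noteq> {} \<and> S \<subseteq> T \<and> T \<subseteq> V \<and> v \<in> V - T \<longrightarrow>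
        f (S \<union> {v}) - f S \<ge> f (T \<union> {v}) - f T)"

definition supermodular_on :: "'a set \<Rightarrow> ('a set \<Rightarrow> real) \<Rightarrow> bool" where
  "supermodular_on V f \<longleftrightarrow> submodular_on V (\<lambda>S. - f S)"

end

theory Submission imports Defs begin

definition gk :: "nat set \<Rightarrow> (nat \<Rightarrow> 'a) \<Rightarrow> ennreal" where
 "gk A x = (if \<exists>k. x k = x 1 \<and> k \<in> A then of_nat (LEAST k. x k = x 1 \<and> k \<in> A) else \<infinity>)"

definition hit :: "'a set \<Rightarrow> (nat \<Rightarrow> 'a) \<Rightarrow> nat set" where
 "hit S x = {k. \<exists>j. 1 \<le> j \<and> j < k \<and> x j \<in> S}"

lemma kappa_gk: "kappa S x = gk (hit S x) x"
  unfolding kappa_def gk_def hit_def by (simp only: mem_Collect_eq)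

lemma gk_anti: assumes "A \<subseteq> B" shows "gk B x \<le> gk A x"
proof (cases "\<exists>k. x k = x 1 \<and> k \<in> A")
  case True
  have LA: "x (LEAST k. x k = x 1 \<and> k \<in> A) = x 1 \<and> (LEAST k. x k = x 1 \<and> k \<in> A) \<in> A"
    by (rule LeastI_ex[OF True])
  then have LB: "x (LEAST k. x k = x 1 \<and> k \<in> A) = x 1 \<and> (LEAST k. x k = x 1 \<and> k \<in> A) \<in> B"
    using assms by blast
  then have eB: "\<exists>k. x k = x 1 \<and> k \<in> B" by blast
  have le: "(LEAST k. x k = x 1 \<and> k \<in> B) \<le> (LEAST k. x k = x 1 \<and> k \<in> A)"
    by (rule Least_le[where P="\<lambda>k. x k = x 1 \<and> k \<in> B", OF LB])
  have gB: "gk B x = of_nat (LEAST k. x k = x 1 \<and> k \<in> B)" unfolding gk_def using eB by (rule if_P)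
  have gA: "gk A x = of_nat (LEAST k. x k = x 1 \<and> k \<in> A)" unfolding gk_def using True by (rule if_P)
  show ?thesis unfolding gA gB using le by simp
next
  case False
  then have "gk A x = \<infinity>" unfolding gk_def by (rule if_not_P)
  then show ?thesis by simp
qed

lemma hit_mono: "S \<subseteq> T \<Longrightarrow> hit S x \<subseteq> hit T x"
  unfolding hit_def by blast

lemma hit_Un: "hit (S \<union> T) x = hit S x \<union> hit T x"
  unfolding hit_def by blast

lemma hit_up: assumes "a \<in> hit S x" "a \<le> b" shows "b \<in> hit S x"
proof -
  obtain j where "1 \<le> j" "j < a" "x j \<in> S" using assms(1) unfolding hit_def by blast
  then have "1 \<le> j \<and> j < b \<and> x j \<in> S" using assms(2) by linarith
  then show ?thesis unfolding hit_def by blast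
qed

lemma hit_chain: "hit S x \<subseteq> hit T x \<or> hit T x \<subseteq> hit S x"
proof (rule ccontr)
  assume "\<not> ?thesis"
  then obtain a b where a: "a \<in> hit S x" "a \<notin> hit T x" and b: "b \<in> hit T x" "b \<notin> hit S x" by blast
  show False
  proof (cases "a \<le> b")
    case True then show False using hit_up[OF a(1) True] b(2) by blast
  next
    case False then have "b \<le> a" by linarith
    then show False using hit_up[OF b(1)] a(2) by blast
  qed
qed

lemma kappa_ineq:
  assumes "S \<subseteq> T"
  shows "kappa (S \<union> {v}) x + kappa T x \<le> kappa (T \<union> {v}) x + kappa S x"
proof -
  have ST: "hit S x \<subseteq> hit T x" using hit_mono[OF assms] .
  consider "hit {v} x \<subseteq> hit S x" | "hit S x \<subseteq> hit {v} x" "hit {v} x \<subseteq> hit T x" | "hit T x \<subseteq> hit {v} x"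
    using hit_chain[of "{v}" x S] hit_chain[of "{v}" x T] by blast
  then show ?thesis
  proof cases
    case 1
    then have e: "hit (S \<union> {v}) x = hit S x" "hit (T \<union> {v}) x = hit T x"
      using ST hit_Un[of S "{v}" x] hit_Un[of T "{v}" x] by blast+
    show ?thesis unfolding kappa_gk e by (simp only: add.commute order_refl)
  next
    case 2
    then have e: "hit (S \<union> {v}) x = hit {v} x" "hit (T \<union> {v}) x = hit T x"
      using hit_Un[of S "{v}" x] hit_Un[of T "{v}" x] by blast+
    have "gk (hit {v} x) x \<le> gk (hit S x) x" using gk_anti[OF 2(1)] .
    then have "gk (hit {v} x) x + gk (hit T x) x \<le> gk (hit S x) x + gk (hit T x) x"
      by (rule add_right_mono)
    then show ?thesis unfolding kappa_gk e by (simp only: add.commute)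
  next
    case 3
    then have e: "hit (S \<union> {v}) x = hit {v} x" "hit (T \<union> {v}) x = hit {v} x"
      using ST hit_Un[of S "{v}" x] hit_Un[of T "{v}" x] by blast+
    have "gk (hit T x) x \<le> gk (hit S x) x" using gk_anti[OF ST] .
    then show ?thesis unfolding kappa_gk e by (rule add_left_mono)
  qed
qed

lemma kappa_INF: "kappa S x = (INF k. if x k = x 1 \<and> (\<exists>j<k. 1 \<le> j \<and> x j \<in> S) then of_nat k else \<infinity>)"
proof (cases "\<exists>k. x k = x 1 \<and> (\<exists>j. 1 \<le> j \<and> j < k \<and> x j \<in> S)")
  case True
  define m where "m = (LEAST k. x k = x 1 \<and> (\<exists>j. 1 \<le> j \<and> j < k \<and> x j \<in> S))"
  have P: "x m = x 1 \<and> (\<exists>j. 1 \<le> j \<and> j < m \<and> x j \<in> S)" unfolding m_def using LeastI_ex[OF True] .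
  have c: "x m = x 1 \<and> (\<exists>j<m. 1 \<le> j \<and> x j \<in> S)" using P by blast
  have le: "m \<le> k" if "x k = x 1 \<and> (\<exists>j<k. 1 \<le> j \<and> x j \<in> S)" for k
    unfolding m_def by (rule Least_le) (use that in blast)
  have "(INF k. if x k = x 1 \<and> (\<exists>j<k. 1 \<le> j \<and> x j \<in> S) then of_nat k else \<infinity>) = (of_nat m :: ennreal)"
  proof (rule antisym)
    show "(INF k. if x k = x 1 \<and> (\<exists>j<k. 1 \<le> j \<and> x j \<in> S) then of_nat k else \<infinity>) \<le> (of_nat m :: ennreal)"
      by (rule INF_lower2[of m]) (simp_all only: c simp_thms if_True order_refl UNIV_I)
    show "(of_nat m :: ennreal) \<le> (INF k. if x k = x 1 \<and> (\<exists>j<k. 1 \<le> j \<and> x j \<in> S) then of_nat k else \<infinity>)"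
    proof (rule INF_greatest)
      fix k
      show "(of_nat m :: ennreal) \<le> (if x k = x 1 \<and> (\<exists>j<k. 1 \<le> j \<and> x j \<in> S) then of_nat k else \<infinity>)"
      proof (cases "x k = x 1 \<and> (\<exists>j<k. 1 \<le> j \<and> x j \<in> S)")
        case True
        then show ?thesis using le[OF True] by simp
      next
        case False
        show ?thesis unfolding if_not_P[OF False] by simp
      qed
    qed
  qed
  moreover have "kappa S x = of_nat m" using True unfolding kappa_def m_def by simp
  ultimately show ?thesis by simp
next
  case False
  then have "\<And>k. \<not> (x k = x 1 \<and> (\<exists>j<k. 1 \<le> j \<and> x j \<in> S))" by blast
  then have "(INF k. if x k = x 1 \<and> (\<exists>j<k. 1 \<le> j \<and> x j \<in> S) then of_nat k else (\<infinity>::ennreal)) = \<infinity>"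
    by simp
  moreover have "kappa S x = \<infinity>" using False unfolding kappa_def by simp
  ultimately show ?thesis by simp
qed

lemma kappa_meas:
  assumes "walk_from V u M X"
  shows "(\<lambda>\<omega>. kappa S (\<lambda>k. X k \<omega>)) \<in> borel_measurable M"
proof -
  have [measurable]: "\<And>k. X k \<in> measurable M (count_space UNIV)" using assms unfolding walk_from_def by auto
  have u: "\<And>\<omega>. \<omega> \<in> space M \<Longrightarrow> X 1 \<omega> = u" using assms unfolding walk_from_def by auto
  have eq: "\<And>\<omega>. \<omega> \<in> space M \<Longrightarrow> kappa S (\<lambda>k. X k \<omega>) =
     (INF k. if X k \<omega> = u \<and> (\<exists>j<k. 1 \<le> j \<and> X j \<omega> \<in> S) then of_nat k else \<infinity>)"
  proof -
    fix \<omega> assume "\<omega> \<in> space M"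
    then have "X 1 \<omega> = u" using u by blast
    then show "kappa S (\<lambda>k. X k \<omega>) =
     (INF k. if X k \<omega> = u \<and> (\<exists>j<k. 1 \<le> j \<and> X j \<omega> \<in> S) then of_nat k else \<infinity>)"
      by (subst kappa_INF) (simp only:)
  qed
  have "(\<lambda>\<omega>. INF k. if X k \<omega> = u \<and> (\<exists>j<k. 1 \<le> j \<and> X j \<omega> \<in> S) then of_nat k else (\<infinity>::ennreal)) \<in> borel_measurable M"
  proof (rule borel_measurable_INF)
    fix k :: nat
    have s: "{\<omega>\<in>space M. X k \<omega> = u \<and> (\<exists>j<k. 1 \<le> j \<and> X j \<omega> \<in> S)}
       = (X k -` {u} \<inter> space M) \<inter> (\<Union>j\<in>{1..<k}. X j -` S \<inter> space M)" by auto
    have a: "X k -` {u} \<inter> space M \<in> sets M"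
      by (rule measurable_sets[of _ _ "count_space UNIV"]) auto
    have b: "(\<Union>j\<in>{1..<k}. X j -` S \<inter> space M) \<in> sets M"
      by (intro sets.finite_UN finite_atLeastLessThan ballI measurable_sets[of _ _ "count_space UNIV"]) auto
    show "(\<lambda>\<omega>. if X k \<omega> = u \<and> (\<exists>j<k. 1 \<le> j \<and> X j \<omega> \<in> S) then of_nat k else (\<infinity>::ennreal)) \<in> borel_measurable M"
    proof (rule measurable_If)
      show "{\<omega>\<in>space M. X k \<omega> = u \<and> (\<exists>j<k. 1 \<le> j \<and> X j \<omega> \<in> S)} \<in> sets M"
        unfolding s using a b by (rule sets.Int)
    qed simp_all
  qed simp
  then show ?thesis by (subst measurable_cong[OF eq])
qed

theorem lemma10:
  fixes V :: "'a set"
    and M :: "'a \<Rightarrow> 'w measure"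
    and X :: "'a \<Rightarrow> nat \<Rightarrow> 'w \<Rightarrow> 'a"
  assumes "finite V"
    and walks: "\<And>u. u \<in> V \<Longrightarrow> walk_from V u (M u) (X u)"
  shows "(\<forall>u\<in>V. (\<forall>v\<in>V. commute_time (M u) (X u) {v} < \<infinity>) \<longrightarrow>
            supermodular_on V (\<lambda>S. enn2real (commute_time (M u) (X u) S)))
       \<and> (\<forall>\<pi> :: 'a \<Rightarrow> real.
            (\<forall>u\<in>V. \<pi> u \<ge> 0) \<and> (\<Sum>u\<in>V. \<pi> u) = 1 \<and>
            (\<forall>u\<in>V. \<pi> u > 0 \<longrightarrow> (\<forall>v\<in>V. commute_time (M u) (X u) {v} < \<infinity>)) \<longrightarrow>
            supermodular_on V (\<lambda>S. \<Sum>u\<in>V. \<pi> u * enn2real (commute_time (M u) (X u) S)))"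
proof -
  let ?K = "\<lambda>u S. commute_time (M u) (X u) S"
  have key: "enn2real (?K u (S \<union> {v})) + enn2real (?K u T) \<le> enn2real (?K u (T \<union> {v})) + enn2real (?K u S)"
    if u: "u \<in> V" and fin: "\<forall>v\<in>V. ?K u {v} < \<infinity>" and S: "S \<noteq> {}" "S \<subseteq> T" "T \<subseteq> V" "v \<in> V"
    for u S T v
  proof -
    have w: "walk_from V u (M u) (X u)" using walks u .
    note meas = kappa_meas[OF w]
    have finA: "?K u A < top" if Ah: "A \<noteq> {}" "A \<subseteq> V" for A
    proof -
      obtain w where wA: "w \<in> A" using Ah by blast
      have "?K u A \<le> ?K u {w}" unfolding commute_time_def
      proof (rule nn_integral_mono)
        fix \<omega>
        have "hit {w} (\<lambda>k. X u k \<omega>) \<subseteq> hit A (\<lambda>k. X u k \<omega>)" by (rule hit_mono) (use wA in blast)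
        then show "kappa A (\<lambda>k. X u k \<omega>) \<le> kappa {w} (\<lambda>k. X u k \<omega>)"
          unfolding kappa_gk by (rule gk_anti)
      qed
      also have "\<dots> < \<infinity>" using fin wA Ah by blast
      finally show ?thesis by simp
    qed
    have "?K u (S \<union> {v}) + ?K u T =
        (\<integral>\<^sup>+ \<omega>. kappa (S \<union> {v}) (\<lambda>k. X u k \<omega>) + kappa T (\<lambda>k. X u k \<omega>) \<partial>M u)"
      unfolding commute_time_def by (rule nn_integral_add[symmetric]) (rule meas)+
    also have "\<dots> \<le> (\<integral>\<^sup>+ \<omega>. kappa (T \<union> {v}) (\<lambda>k. X u k \<omega>) + kappa S (\<lambda>k. X u k \<omega>) \<partial>M u)"
      by (rule nn_integral_mono) (rule kappa_ineq[OF S(2)])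
    also have "\<dots> = ?K u (T \<union> {v}) + ?K u S"
      unfolding commute_time_def by (rule nn_integral_add) (rule meas)+
    finally have ineq: "?K u (S \<union> {v}) + ?K u T \<le> ?K u (T \<union> {v}) + ?K u S" .
    have f1: "?K u (S \<union> {v}) < top" by (rule finA) (use S in auto)
    have f2: "?K u T < top" by (rule finA) (use S in auto)
    have f3: "?K u (T \<union> {v}) < top" by (rule finA) (use S in auto)
    have f4: "?K u S < top" by (rule finA) (use S in auto)
    have "enn2real (?K u (S \<union> {v}) + ?K u T) \<le> enn2real (?K u (T \<union> {v}) + ?K u S)"
      by (rule enn2real_mono[OF ineq]) (simp only: ennreal_add_less_top f3 f4 simp_thms)
    then show ?thesis by (simp only: enn2real_plus[OF f1 f2] enn2real_plus[OF f3 f4])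
  qed
  show ?thesis
  proof (intro conjI ballI impI allI)
    fix u assume uh: "u \<in> V" "\<forall>v\<in>V. ?K u {v} < \<infinity>"
    show "supermodular_on V (\<lambda>S. enn2real (?K u S))"
      unfolding supermodular_on_def submodular_on_def
    proof (intro allI impI)
      fix S T v assume S: "S \<noteq> {} \<and> S \<subseteq> T \<and> T \<subseteq> V \<and> v \<in> V - T"
      have "enn2real (?K u (S \<union> {v})) + enn2real (?K u T) \<le> enn2real (?K u (T \<union> {v})) + enn2real (?K u S)"
        by (rule key) (use uh S in auto)
      then show "- enn2real (?K u (T \<union> {v})) - - enn2real (?K u T)
          \<le> - enn2real (?K u (S \<union> {v})) - - enn2real (?K u S)" by linarith
    qed
  next
    fix \<pi> :: "'a \<Rightarrow> real"
    assume h: "(\<forall>u\<in>V. \<pi> u \<ge> 0) \<and> (\<Sum>u\<in>V. \<pi> u) = 1 \<and>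
            (\<forall>u\<in>V. \<pi> u > 0 \<longrightarrow> (\<forall>v\<in>V. ?K u {v} < \<infinity>))"
    show "supermodular_on V (\<lambda>S. \<Sum>u\<in>V. \<pi> u * enn2real (?K u S))"
      unfolding supermodular_on_def submodular_on_def
    proof (intro allI impI)
      fix S T v assume S: "S \<noteq> {} \<and> S \<subseteq> T \<and> T \<subseteq> V \<and> v \<in> V - T"
      have "(\<Sum>u\<in>V. \<pi> u * (enn2real (?K u (S \<union> {v})) + enn2real (?K u T)))
            \<le> (\<Sum>u\<in>V. \<pi> u * (enn2real (?K u (T \<union> {v})) + enn2real (?K u S)))"
      proof (rule sum_mono)
        fix u assume u: "u \<in> V"
        show "\<pi> u * (enn2real (?K u (S \<union> {v})) + enn2real (?K u T))
            \<le> \<pi> u * (enn2real (?K u (T \<union> {v})) + enn2real (?K u S))"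
        proof (cases "\<pi> u > 0")
          case True
          have "enn2real (?K u (S \<union> {v})) + enn2real (?K u T) \<le> enn2real (?K u (T \<union> {v})) + enn2real (?K u S)"
            by (rule key) (use h S u True in auto)
          then show ?thesis using True by (intro mult_left_mono) auto
        next
          case False
          then have "\<pi> u = 0" using h u by force
          then show ?thesis by simp
        qed
      qed
      then show "- (\<Sum>u\<in>V. \<pi> u * enn2real (?K u (T \<union> {v}))) - - (\<Sum>u\<in>V. \<pi> u * enn2real (?K u T))
          \<le> - (\<Sum>u\<in>V. \<pi> u * enn2real (?K u (S \<union> {v}))) - - (\<Sum>u\<in>V. \<pi> u * enn2real (?K u S))"
        by (simp add: distrib_left sum.distrib)
    qed
  qed
qed

end
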